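(* Let $0<\alpha'<2/9$, $0<\beta'<1/4$, $\tfrac98\alpha'\neq\beta'$. Then the separability $\mathcal{S}=\tfrac12\big(\|z_1-z_5\|_2^2+\|z_2-z_5\|_2^2\big)$ between ID nodes and the semantic OOD node equals $$\mathcal{S}=\begin{cases}(7+12\beta'+12\alpha')\Big(\frac{1-2\beta'}{3}\big(1-\beta'-\tfrac34\alpha'\big)^2+1\Big), & \tfrac98\alpha'>\beta',\\[4pt](7+12\beta'+12\alpha')\Big(\frac{2-3\alpha'}{8}\big(1-\beta'-\tfrac34\alpha'\big)^2+1\Big), & \tfrac98\alpha'<\beta'.\end{cases}$$
   Context: Toy five-node model. Nodes, in order: 1 = angel in sketch (ID, class angel), 2 = tiger in sketch (ID, class tiger), 3 = angel in painting (covariate OOD, class angel), 4 = tiger in painting (covariate OOD, class tiger), 5 = panda (semantic OOD). The model is the first-order approximation (in $\alpha'=\alpha/\rho$, $\beta'=\beta/\rho$, with $\eta_u=5,\eta_l=1$) of the augmentation graph, given concretely by $M=\begin{pmatrix}1-2\beta'-\frac32\alpha'&2\beta'&\frac{3}{\sqrt2}\alpha'&0&0\\2\beta'&1-2\beta'-\frac32\alpha'&0&\frac3{\sqrt2}\alpha'&0\\\frac3{\sqrt2}\alpha'&0&1-2\beta'-3\alpha'&2\beta'&0\\0&\frac3{\sqrt2}\alpha'&2\beta'&1-2\beta'-3\alpha'&0\\0&0&0&0&1\end{pmatrix}$, $C=7+12\beta'+12\alpha'$, and $\Delta=\sqrt{C}\,\mathrm{diag}\big(\tfrac{1}{\sqrt2}(1-\beta'-\tfrac34\alpha'),\tfrac1{\sqrt2}(1-\beta'-\tfrac34\alpha'),1-\beta'-\tfrac32\alpha',1-\beta'-\tfrac32\alpha',1\big)$.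 Embeddings: let $V\in\mathbb{R}^{5\times3}$ have orthonormal columns spanning eigenvectors of $M$ for its three largest eigenvalues (with multiplicity), $\Sigma$ the diagonal matrix of those eigenvalues, and $Z=\Delta V\Sigma^{1/2}$ with $i$-th row $z_i^\top$ the embedding of node $i$. (Distances between rows do not depend on the choice of orthonormal basis within eigenspaces.) *)

theory Defs
  imports Complex_Main
begin

text \<open>Nodes are indexed 1..5, embedding coordinates 1..3.
  Matrices are represented as functions nat => nat => real, meaningful on the
  index ranges {1..5} x {1..5} (resp. {1..5} x {1..3}).
  Parameters: a = alpha', b = beta'.\<close>

definition M_list :: "real \<Rightarrow> real \<Rightarrow> real list list" where
  "M_list a b =
    [[1 - 2*b - 3/2*a, 2*b, 3/sqrt 2*a, 0, 0],
     [2*b, 1 - 2*b - 3/2*a, 0, 3/sqrt 2*a, 0],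
     [3/sqrt 2*a, 0, 1 - 2*b - 3*a, 2*b, 0],
     [0, 3/sqrt 2*a, 2*b, 1 - 2*b - 3*a, 0],
     [0, 0, 0, 0, 1]]"

definition Mmat :: "real \<Rightarrow> real \<Rightarrow> nat \<Rightarrow> nat \<Rightarrow> real" where
  "Mmat a b i j = (M_list a b ! (i - 1)) ! (j - 1)"

definition Cconst :: "real \<Rightarrow> real \<Rightarrow> real" where
  "Cconst a b = 7 + 12*b + 12*a"

definition Delta_diag :: "real \<Rightarrow> real \<Rightarrow> nat \<Rightarrow> real" where
  "Delta_diag a b i = sqrt (Cconst a b) *
     (if i = 1 \<or> i = 2 then (1 - b - 3/4*a) / sqrt 2
      else if i = 3 \<or> i = 4 then 1 - b - 3/2*a
      else 1)"

text \<open>V (5x3) has orthonormal columns which are eigenvectors of M with eigenvalues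
  sigma 1, sigma 2, sigma 3, and these are the three largest eigenvalues of M
  counted with multiplicity: since M is symmetric, the remaining eigenvalues are
  exactly the eigenvalues of M on the orthogonal complement of the column span
  of V, and all of those are required to be at most every sigma j.\<close>
definition top3_eig :: "real \<Rightarrow> real \<Rightarrow> (nat \<Rightarrow> nat \<Rightarrow> real) \<Rightarrow> (nat \<Rightarrow> real) \<Rightarrow> bool" where
  "top3_eig a b V \<sigma> \<longleftrightarrow>
     (\<forall>j\<in>{1..3}. \<forall>k\<in>{1..3}.
        (\<Sum>i=1..5. V i j * V i k) = (if j = k then 1 else 0)) \<and>
     (\<forall>i\<in>{1..5}. \<forall>j\<in>{1..3}.
        (\<Sum>k=1..5. Mmat a b i k * V k j) = \<sigma> j * V i j) \<and>
     (\<forall>(x::nat \<Rightarrow> real) \<mu>.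
        (\<exists>i\<in>{1..5}. x i \<noteq> 0) \<and>
        (\<forall>i\<in>{1..5}. (\<Sum>k=1..5. Mmat a b i k * x k) = \<mu> * x i) \<and>
        (\<forall>j\<in>{1..3}. (\<Sum>i=1..5. V i j * x i) = 0)
        \<longrightarrow> (\<forall>j\<in>{1..3}. \<mu> \<le> \<sigma> j))"

definition Zemb :: "real \<Rightarrow> real \<Rightarrow> (nat \<Rightarrow> nat \<Rightarrow> real) \<Rightarrow> (nat \<Rightarrow> real) \<Rightarrow> nat \<Rightarrow> nat \<Rightarrow> real" where
  "Zemb a b V \<sigma> i j = Delta_diag a b i * V i j * sqrt (\<sigma> j)"

definition sqdist3 :: "(nat \<Rightarrow> real) \<Rightarrow> (nat \<Rightarrow> real) \<Rightarrow> real" where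
  "sqdist3 u v = (\<Sum>j=1..3. (u j - v j)^2)"

definition separability :: "real \<Rightarrow> real \<Rightarrow> (nat \<Rightarrow> nat \<Rightarrow> real) \<Rightarrow> (nat \<Rightarrow> real) \<Rightarrow> real" where
  "separability a b V \<sigma> =
     (sqdist3 (Zemb a b V \<sigma> 1) (Zemb a b V \<sigma> 5) + sqdist3 (Zemb a b V \<sigma> 2) (Zemb a b V \<sigma> 5)) / 2"

end

theory Submission
  imports Defs "HOL-Analysis.Analysis"
begin

lemma sum13: "(\<Sum>j=(1::nat)..3. f j) = f 1 + f 2 + f (3::nat)"
proof -
  have "{1..3::nat} = {1,2,3}" by auto
  thus ?thesis by (simp add: add.assoc)
qed
lemma sum15: "(\<Sum>j=(1::nat)..5. f j) = f 1 + f 2 + f 3 + f 4 + f (5::nat)"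
proof -
  have "{1..5::nat} = {1,2,3,4,5}" by auto
  thus ?thesis by (simp add: add.assoc)
qed
lemma sum15_3: "(\<Sum>j=(1::nat)..5. f j) = (\<Sum>j=(1::nat)..3. f j) + f 4 + f (5::nat)"
  unfolding sum15 sum13 by simp
lemma ball13: "(\<forall>j\<in>{1..3::nat}. P j) \<longleftrightarrow> P 1 \<and> P 2 \<and> P 3"
proof -
  have "{1..3::nat} = {1,2,3}" by auto
  thus ?thesis by simp
qed

lemma mult_if10: "(x::real) * (if P then 1 else 0) = (if P then x else 0)" by simp

lemma orth3:
  fixes U :: "nat \<Rightarrow> nat \<Rightarrow> real"
  assumes "\<forall>j\<in>{1..3}. \<forall>l\<in>{1..3}. (\<Sum>k=1..3. U j k * U l k) = (if j=l then 1 else 0)"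
  shows "\<forall>k\<in>{1..3}. \<forall>l\<in>{1..3}. (\<Sum>j=1..3. U j k * U j l) = (if k=l then 1 else 0)"
proof -
  define h :: "3 \<Rightarrow> nat" where "h x = (if x = 1 then 1 else if x = 2 then 2 else 3)" for x
  have h1: "h 1 = 1" "h 2 = 2" "h 3 = 3" by (simp_all add: h_def)
  define A :: "real^3^3" where "A = (\<chi> j k. U (h j) (h k))"
  have "A ** transpose A = mat 1"
    using assms unfolding ball13 sum13
    by (simp add: vec_eq_iff forall_3 sum_3 A_def matrix_matrix_mult_def transpose_def mat_def h1)
  hence "transpose A ** A = mat 1" using matrix_left_right_inverse by blast
  hence "\<forall>k l. (transpose A ** A) $ k $ l = mat 1 $ k $ l" by simp
  hence *: "\<forall>k l. (\<Sum>j\<in>UNIV. A $ j $ k * A $ j $ l) = (if k = l then 1 else 0)"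
    by (simp add: matrix_matrix_mult_def transpose_def mat_def)
  show ?thesis using * unfolding ball13 sum13
    by (simp add: forall_3 sum_3 A_def h1)
qed

definition top3 :: "(nat \<Rightarrow> nat \<Rightarrow> real) \<Rightarrow> (nat \<Rightarrow> nat \<Rightarrow> real) \<Rightarrow> (nat \<Rightarrow> real) \<Rightarrow> bool" where
  "top3 M V \<sigma> \<longleftrightarrow>
     (\<forall>j\<in>{1..3}. \<forall>k\<in>{1..3}.
        (\<Sum>i=1..5. V i j * V i k) = (if j = k then 1 else 0)) \<and>
     (\<forall>i\<in>{1..5}. \<forall>j\<in>{1..3}.
        (\<Sum>k=1..5. M i k * V k j) = \<sigma> j * V i j) \<and>
     (\<forall>(x::nat \<Rightarrow> real) \<mu>.
        (\<exists>i\<in>{1..5}. x i \<noteq> 0) \<and>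
        (\<forall>i\<in>{1..5}. (\<Sum>k=1..5. M i k * x k) = \<mu> * x i) \<and>
        (\<forall>j\<in>{1..3}. (\<Sum>i=1..5. V i j * x i) = 0)
        \<longrightarrow> (\<forall>j\<in>{1..3}. \<mu> \<le> \<sigma> j))"

lemma top3_eig_eq: "top3_eig a b V \<sigma> = top3 (Mmat a b) V \<sigma>"
  unfolding top3_eig_def top3_def by simp

lemma gen:
  fixes M F V :: "nat \<Rightarrow> nat \<Rightarrow> real" and lam \<sigma> :: "nat \<Rightarrow> real"
  assumes symM: "\<forall>i\<in>{1..5}. \<forall>l\<in>{1..5}. M i l = M l i"
  and orthF: "\<forall>k\<in>{1..5}. \<forall>l\<in>{1..5}. (\<Sum>i=1..5. F k i * F l i) = (if k=l then 1 else 0)"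
  and complF: "\<forall>i\<in>{1..5}. \<forall>i'\<in>{1..5}. (\<Sum>k=1..5. F k i * F k i') = (if i=i' then 1 else 0)"
  and eigF: "\<forall>k\<in>{1..5}. \<forall>i\<in>{1..5}. (\<Sum>l=1..5. M i l * F k l) = lam k * F k i"
  and gap: "\<forall>k\<in>{1..3}. \<forall>k'\<in>{4..5}. lam k' < lam k"
  and top: "top3 M V \<sigma>"
  shows "(\<Sum>j=1..3. \<sigma> j * (\<Sum>i=1..5. y i * V i j)^2) = (\<Sum>k=1..3. lam k * (\<Sum>i=1..5. y i * F k i)^2)"
    and "(\<forall>k\<in>{1..3}. lam k \<ge> 0) \<Longrightarrow> \<forall>j\<in>{1..3}. \<sigma> j \<ge> 0"
proof -
  have O: "\<And>j l. j\<in>{1..3} \<Longrightarrow> l\<in>{1..3} \<Longrightarrow> (\<Sum>i=1..5. V i j * V i l) = (if j = l then 1 else 0)"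
   and Ev: "\<And>i j. i\<in>{1..5} \<Longrightarrow> j\<in>{1..3} \<Longrightarrow> (\<Sum>k=1..5. M i k * V k j) = \<sigma> j * V i j"
   and C: "\<And>x \<mu>. (\<exists>i\<in>{1..5}. x i \<noteq> 0) \<Longrightarrow>
        (\<forall>i\<in>{1..5}. (\<Sum>k=1..5. M i k * x k) = \<mu> * x i) \<Longrightarrow>
        (\<forall>j\<in>{1..3}. (\<Sum>i=1..5. V i j * x i) = 0) \<Longrightarrow> (\<forall>j\<in>{1..3}. \<mu> \<le> \<sigma> j)"
    using top unfolding top3_def by blast+
  define W where "W j k = (\<Sum>i=1..5. F k i * V i j)" for j k
  have Vexp: "V i j = (\<Sum>k=1..5. W j k * F k i)" if "i\<in>{1..5}" for i j
  proof -
    have "(\<Sum>k=1..5. W j k * F k i) = (\<Sum>k=1..5. \<Sum>i'=1..5. V i' j * (F k i' * F k i))"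
      by (simp add: W_def sum_distrib_left sum_distrib_right mult_ac)
    also have "\<dots> = (\<Sum>i'=1..5. V i' j * (\<Sum>k=1..5. F k i' * F k i))"
      by (subst sum.swap) (simp add: sum_distrib_left)
    also have "\<dots> = (\<Sum>i'=1..5. if i' = i then V i' j else 0)"
      using complF that by (intro sum.cong) auto
    also have "\<dots> = V i j" using that by simp
    finally show ?thesis by simp
  qed
  have Pars: "(\<Sum>k=1..5. W j k * W l k) = (if j = l then 1 else 0)" if "j\<in>{1..3}" "l\<in>{1..3}" for j l
  proof -
    have "(\<Sum>k=1..5. W j k * W l k) = (\<Sum>k=1..5. \<Sum>i=1..5. V i l * (W j k * F k i))"
      by (simp add: W_def sum_distrib_left mult_ac)
    also have "\<dots> = (\<Sum>i=1..5. V i l * (\<Sum>k=1..5. W j k * F k i))"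
      by (subst sum.swap) (simp add: sum_distrib_left)
    also have "\<dots> = (\<Sum>i=1..5. V i j * V i l)"
      using Vexp by (intro sum.cong) auto
    finally show ?thesis using O that by simp
  qed
  have EigW: "\<sigma> j * W j k = lam k * W j k" if "j\<in>{1..3}" "k\<in>{1..5}" for j k
  proof -
    have "\<sigma> j * W j k = (\<Sum>i=1..5. F k i * (\<sigma> j * V i j))"
      by (simp add: W_def sum_distrib_left mult_ac)
    also have "\<dots> = (\<Sum>i=1..5. \<Sum>l=1..5. V l j * (M i l * F k i))"
    proof (intro sum.cong refl)
      fix i :: nat assume "i\<in>{1..5}"
      hence "\<sigma> j * V i j = (\<Sum>l=1..5. M i l * V l j)" using Ev that by simp
      thus "F k i * (\<sigma> j * V i j) = (\<Sum>l=1..5. V l j * (M i l * F k i))"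
        by (simp add: sum_distrib_left mult_ac)
    qed
    also have "\<dots> = (\<Sum>l=1..5. V l j * (\<Sum>i=1..5. M l i * F k i))"
      apply (subst sum.swap) apply (simp add: sum_distrib_left)
      apply (intro sum.cong refl) using symM by (auto simp: mult_ac)
    also have "\<dots> = (\<Sum>l=1..5. V l j * (lam k * F k l))"
      using eigF that by (intro sum.cong) auto
    also have "\<dots> = lam k * W j k" by (simp add: W_def sum_distrib_left mult_ac)
    finally show ?thesis .
  qed
  define r where "r k i = F k i - (\<Sum>j=1..3. W j k * V i j)" for k i
  have reig: "(\<Sum>l=1..5. M i l * r k l) = lam k * r k i" if "k\<in>{1..5}" "i\<in>{1..5}" for k i
  proof -
    have "(\<Sum>l=1..5. M i l * r k l) = (\<Sum>l=1..5. M i l * F k l) - (\<Sum>j=1..3. W j k * (\<Sum>l=1..5. M i l * V l j))"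
      unfolding r_def by (simp add: right_diff_distrib sum_subtractf sum_distrib_left mult_ac) (rule sum.swap)
    also have "\<dots> = lam k * F k i - (\<Sum>j=1..3. lam k * W j k * V i j)"
      using eigF Ev EigW that by (auto intro!: sum.cong simp: mult_ac)
    finally show ?thesis by (simp add: r_def right_diff_distrib sum_distrib_left mult_ac)
  qed
  have rorth: "(\<Sum>i=1..5. V i j' * r k i) = 0" if "j'\<in>{1..3}" for j' k
  proof -
    have "(\<Sum>i=1..5. V i j' * r k i) = W j' k - (\<Sum>j=1..3. W j k * (\<Sum>i=1..5. V i j' * V i j))"
      unfolding r_def W_def by (simp add: right_diff_distrib sum_subtractf sum_distrib_left mult_ac) (rule sum.swap)
    also have "\<dots> = W j' k - (\<Sum>j=1..3. W j k * (if j' = j then 1 else 0))"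
      using O that by (auto intro!: sum.cong)
    finally show ?thesis using that by (simp add: mult_if10)
  qed
  have rnorm: "(\<Sum>i=1..5. (r k i)^2) = 1 - (\<Sum>j=1..3. (W j k)^2)" if "k\<in>{1..5}" for k
  proof -
    have "(\<Sum>i=1..5. (r k i)^2) = (\<Sum>i=1..5. r k i * F k i) - (\<Sum>j=1..3. W j k * (\<Sum>i=1..5. V i j * r k i))"
      by (simp add: power2_eq_square r_def[of k] left_diff_distrib sum_subtractf sum_distrib_left sum_distrib_right mult_ac) (rule sum.swap)
    also have "\<dots> = (\<Sum>i=1..5. r k i * F k i)" using rorth by simp
    also have "\<dots> = (\<Sum>i=1..5. F k i * F k i) - (\<Sum>j=1..3. W j k * (\<Sum>i=1..5. F k i * V i j))"
      by (simp add: r_def left_diff_distrib right_diff_distrib sum_subtractf sum_distrib_left sum_distrib_right mult_ac) (rule sum.swap)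
    also have "\<dots> = (\<Sum>i=1..5. F k i * F k i) - (\<Sum>j=1..3. W j k * W j k)"
      by (simp add: W_def)
    finally show ?thesis using orthF that by (simp add: power2_eq_square)
  qed
  have rzero: "r k i = 0" if "k\<in>{1..3}" "i\<in>{1..5}" for k i
  proof (rule ccontr)
    assume ne: "r k i \<noteq> 0"
    have k5: "k\<in>{1..5}" using that by auto
    have ge: "\<forall>j\<in>{1..3}. lam k \<le> \<sigma> j"
      apply (rule C[of "r k"]) using ne that apply blast
      using reig k5 apply blast
      using rorth by blast
    have W45: "W j k' = 0" if "j\<in>{1..3}" "k'\<in>{4..5}" for j k'
    proof -
      have "(\<sigma> j - lam k') * W j k' = 0" using EigW[of j k'] that by (auto simp: algebra_simps)
      moreover have "\<sigma> j - lam k' > 0"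
      proof -
        have "lam k \<le> \<sigma> j" using ge that by blast
        moreover have "lam k' < lam k" using gap \<open>k\<in>{1..3}\<close> that by blast
        ultimately show ?thesis by simp
      qed
      ultimately show ?thesis by simp
    qed
    have rows: "\<forall>j\<in>{1..3}. \<forall>l\<in>{1..3}. (\<Sum>k=1..3. W j k * W l k) = (if j=l then 1 else 0)"
    proof (intro ballI)
      fix j l :: nat assume jl: "j\<in>{1..3}" "l\<in>{1..3}"
      then have "(\<Sum>k=1..5. W j k * W l k) = (if j=l then 1 else 0)" by (rule Pars)
      moreover have "W j 4 = 0" "W j 5 = 0" using W45 jl by auto
      ultimately show "(\<Sum>k=1..3. W j k * W l k) = (if j=l then 1 else 0)" unfolding sum15_3 by simp
    qed
    note cols = orth3[OF rows]
    have "(\<Sum>i=1..5. (r k i)^2) = 0" using rnorm[OF k5] cols that by (simp add: power2_eq_square)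
    then have "\<forall>i\<in>{1..5}. (r k i)^2 = 0" by (subst (asm) sum_nonneg_eq_0_iff) auto
    thus False using ne that by simp
  qed
  have colorth: "\<forall>k\<in>{1..3}. \<forall>l\<in>{1..3}. (\<Sum>j=1..3. W j k * W j l) = (if k=l then 1 else 0)"
  proof (intro ballI)
    fix k l :: nat assume kl: "k\<in>{1..3}" "l\<in>{1..3}"
    have "(\<Sum>j=1..3. W j k * W j l) = (\<Sum>i=1..5. F l i * (\<Sum>j=1..3. W j k * V i j))"
      by (simp add: W_def sum_distrib_left sum_distrib_right mult_ac) (rule sum.swap)
    also have "\<dots> = (\<Sum>i=1..5. F l i * F k i)"
    proof (intro sum.cong refl)
      fix i :: nat assume "i \<in> {1..5}"
      then have "r k i = 0" using rzero kl by blast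
      thus "F l i * (\<Sum>j=1..3. W j k * V i j) = F l i * F k i" by (simp add: r_def)
    qed
    finally show "(\<Sum>j=1..3. W j k * W j l) = (if k=l then 1 else 0)" using orthF kl by auto
  qed
  have rowsK: "\<forall>k\<in>{1..3}. \<forall>l\<in>{1..3}. (\<Sum>j=1..3. W k j * W l j) = (if k=l then 1 else 0)"
    using orth3[of "\<lambda>a b. W b a"] colorth by blast
  have W45: "W j 4 = 0 \<and> W j 5 = 0" if "j\<in>{1..3}" for j
  proof -
    have "(\<Sum>k=1..5. W j k * W j k) = 1" using Pars that by simp
    hence "(\<Sum>k=1..3. W j k * W j k) + W j 4 * W j 4 + W j 5 * W j 5 = 1" by (simp only: sum15_3)
    moreover have "(\<Sum>k=1..3. W j k * W j k) = 1" using rowsK that by simp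
    ultimately have "W j 4 * W j 4 + W j 5 * W j 5 = 0" by linarith
    thus ?thesis by (simp add: sum_squares_eq_zero_iff)
  qed
  define Y where "Y k = (\<Sum>i=1..5. y i * F k i)" for k
  have yv: "(\<Sum>i=1..5. y i * V i j) = (\<Sum>k=1..3. W j k * Y k)" if "j\<in>{1..3}" for j
  proof -
    have "(\<Sum>i=1..5. y i * V i j) = (\<Sum>i=1..5. y i * (\<Sum>k=1..5. W j k * F k i))"
      using Vexp by (intro sum.cong refl) auto
    also have "\<dots> = (\<Sum>k=1..5. W j k * Y k)"
      by (simp add: Y_def sum_distrib_left sum_distrib_right mult_ac) (rule sum.swap)
    also have "\<dots> = (\<Sum>k=1..3. W j k * Y k)" using W45[OF that] unfolding sum15_3 by simp
    finally show ?thesis .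
  qed
  have "(\<Sum>j=1..3. \<sigma> j * (\<Sum>i=1..5. y i * V i j)^2) = (\<Sum>j=1..3. \<Sum>k=1..3. \<Sum>l=1..3. lam k * Y k * Y l * (W j k * W j l))"
  proof (intro sum.cong refl)
    fix j :: nat assume j: "j\<in>{1..3}"
    have "\<sigma> j * (\<Sum>i=1..5. y i * V i j)^2 = (\<Sum>k=1..3. \<sigma> j * W j k * Y k) * (\<Sum>l=1..3. W j l * Y l)"
      using yv[OF j] by (simp add: power2_eq_square sum_distrib_left mult_ac)
    also have "\<dots> = (\<Sum>k=1..3. lam k * W j k * Y k) * (\<Sum>l=1..3. W j l * Y l)"
      using EigW j by (auto intro!: sum.cong)
    also have "\<dots> = (\<Sum>k=1..3. \<Sum>l=1..3. lam k * Y k * Y l * (W j k * W j l))"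
      by (simp add: sum_distrib_left sum_distrib_right mult_ac)
    finally show "\<sigma> j * (\<Sum>i=1..5. y i * V i j)^2 = (\<Sum>k=1..3. \<Sum>l=1..3. lam k * Y k * Y l * (W j k * W j l))" .
  qed
  also have "\<dots> = (\<Sum>k=1..3. \<Sum>j=1..3. \<Sum>l=1..3. lam k * Y k * Y l * (W j k * W j l))"
    by (rule sum.swap)
  also have "\<dots> = (\<Sum>k=1..3. \<Sum>l=1..3. \<Sum>j=1..3. lam k * Y k * Y l * (W j k * W j l))"
    by (rule sum.cong[OF refl], rule sum.swap)
  also have "\<dots> = (\<Sum>k=1..3. \<Sum>l=1..3. lam k * Y k * Y l * (\<Sum>j=1..3. W j k * W j l))"
    by (simp add: sum_distrib_left)
  also have "\<dots> = (\<Sum>k=1..3. \<Sum>l=1..3. lam k * Y k * Y l * (if k = l then 1 else 0))"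
    using colorth by (auto intro!: sum.cong)
  also have "\<dots> = (\<Sum>k=1..3. lam k * (Y k)^2)"
    by (intro sum.cong refl) (simp add: mult_if10 power2_eq_square)
  finally show "(\<Sum>j=1..3. \<sigma> j * (\<Sum>i=1..5. y i * V i j)^2) = (\<Sum>k=1..3. lam k * (\<Sum>i=1..5. y i * F k i)^2)"
    by (simp add: Y_def)
  show "(\<forall>k\<in>{1..3}. lam k \<ge> 0) \<Longrightarrow> \<forall>j\<in>{1..3}. \<sigma> j \<ge> 0"
  proof (intro ballI)
    fix j :: nat assume nn: "\<forall>k\<in>{1..3}. lam k \<ge> 0" and j: "j\<in>{1..3}"
    have "\<sigma> j = \<sigma> j * (\<Sum>k=1..3. W j k * W j k)" using rowsK j by simp
    also have "\<dots> = (\<Sum>k=1..3. (\<sigma> j * W j k) * W j k)" by (simp add: sum_distrib_left mult_ac)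
    also have "\<dots> = (\<Sum>k=1..3. lam k * (W j k * W j k))" using EigW j by (auto intro!: sum.cong)
    also have "\<dots> \<ge> 0" using nn by (intro sum_nonneg) auto
    finally show "\<sigma> j \<ge> 0" .
  qed
qed

lemma ball15: "(\<forall>j\<in>{1..5::nat}. P j) \<longleftrightarrow> P 1 \<and> P 2 \<and> P 3 \<and> P 4 \<and> P 5"
proof -
  have "{1..5::nat} = {1,2,3,4,5}" by auto
  thus ?thesis by simp
qed

definition FA_list :: "real list list" where
  "FA_list = (let u = sqrt 6 / 6; w = sqrt 2 * (sqrt 6 / 6) in
    [[w, w, u, u, 0], [0,0,0,0,1], [w, -w, u, -u, 0], [u, u, -w, -w, 0], [u, -u, -w, w, 0]])"
definition FA :: "nat \<Rightarrow> nat \<Rightarrow> real" where "FA k i = FA_list ! (k - 1) ! (i - 1)"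

lemma s2: "sqrt 2 * sqrt 2 = (2::real)" by simp
lemma s6: "sqrt 6 * sqrt 6 = (6::real)" by simp
lemma s2': "sqrt 2 * (sqrt 2 * x) = (2::real) * x" by (simp add: mult.assoc[symmetric])
lemma s6': "sqrt 6 * (sqrt 6 * x) = (6::real) * x" by (simp add: mult.assoc[symmetric])

lemma orthFA: "\<forall>k\<in>{1..5}. \<forall>l\<in>{1..5}. (\<Sum>i=1..5. FA k i * FA l i) = (if k=l then 1 else 0)"
  unfolding ball15 sum15 FA_def FA_list_def Let_def
  by (simp add: algebra_simps s2 s6)
lemma complFA: "\<forall>i\<in>{1..5}. \<forall>i'\<in>{1..5}. (\<Sum>k=1..5. FA k i * FA k i') = (if i=i' then 1 else 0)"
  unfolding ball15 sum15 FA_def FA_list_def Let_def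
  by (simp add: algebra_simps s2 s6)

definition lamA :: "real \<Rightarrow> real \<Rightarrow> nat \<Rightarrow> real" where
  "lamA a b k = [1, 1, 1 - 4*b, 1 - 9/2*a, 1 - 4*b - 9/2*a] ! (k - 1)"

lemma symM: "\<forall>i\<in>{1..5}. \<forall>l\<in>{1..5}. Mmat a b i l = Mmat a b l i"
  unfolding ball15 Mmat_def M_list_def by simp

lemma s2i: "3 / sqrt 2 * a = 3 * sqrt 2 / 2 * (a::real)"
  by (simp add: field_simps)

lemma eigFA: "\<forall>k\<in>{1..5}. \<forall>i\<in>{1..5}. (\<Sum>l=1..5. Mmat a b i l * FA k l) = lamA a b k * FA k i"
  unfolding ball15 sum15 FA_def FA_list_def Let_def Mmat_def M_list_def lamA_def s2i
  by (simp add: field_simps s2 s6 s2' s6')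

definition FB_list :: "real list list" where
  "FB_list = (let u = sqrt 6 / 6; w = sqrt 2 * (sqrt 6 / 6) in
    [[w, w, u, u, 0], [0,0,0,0,1], [u, u, -w, -w, 0], [w, -w, u, -u, 0], [u, -u, -w, w, 0]])"
definition FB :: "nat \<Rightarrow> nat \<Rightarrow> real" where "FB k i = FB_list ! (k - 1) ! (i - 1)"

lemma orthFB: "\<forall>k\<in>{1..5}. \<forall>l\<in>{1..5}. (\<Sum>i=1..5. FB k i * FB l i) = (if k=l then 1 else 0)"
  unfolding ball15 sum15 FB_def FB_list_def Let_def
  by (simp add: algebra_simps s2 s6)
lemma complFB: "\<forall>i\<in>{1..5}. \<forall>i'\<in>{1..5}. (\<Sum>k=1..5. FB k i * FB k i') = (if i=i' then 1 else 0)"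
  unfolding ball15 sum15 FB_def FB_list_def Let_def
  by (simp add: algebra_simps s2 s6)

definition lamB :: "real \<Rightarrow> real \<Rightarrow> nat \<Rightarrow> real" where
  "lamB a b k = [1, 1, 1 - 9/2*a, 1 - 4*b, 1 - 4*b - 9/2*a] ! (k - 1)"

lemma eigFB: "\<forall>k\<in>{1..5}. \<forall>i\<in>{1..5}. (\<Sum>l=1..5. Mmat a b i l * FB k l) = lamB a b k * FB k i"
  unfolding ball15 sum15 FB_def FB_list_def Let_def Mmat_def M_list_def lamB_def s2i
  by (simp add: field_simps s2 s6 s2' s6')

lemma gen_exists:
  fixes M F :: "nat \<Rightarrow> nat \<Rightarrow> real" and lam :: "nat \<Rightarrow> real"
  assumes symM: "\<forall>i\<in>{1..5}. \<forall>l\<in>{1..5}. M i l = M l i"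
  and orthF: "\<forall>k\<in>{1..5}. \<forall>l\<in>{1..5}. (\<Sum>i=1..5. F k i * F l i) = (if k=l then 1 else 0)"
  and complF: "\<forall>i\<in>{1..5}. \<forall>i'\<in>{1..5}. (\<Sum>k=1..5. F k i * F k i') = (if i=i' then 1 else 0)"
  and eigF: "\<forall>k\<in>{1..5}. \<forall>i\<in>{1..5}. (\<Sum>l=1..5. M i l * F k l) = lam k * F k i"
  and gap: "\<forall>k\<in>{1..3}. \<forall>k'\<in>{4..5}. lam k' < lam k"
  shows "top3 M (\<lambda>i j. F j i) lam"
  unfolding top3_def
proof (intro conjI allI impI)
  show "\<forall>j\<in>{1..3}. \<forall>k\<in>{1..3}. (\<Sum>i=1..5. F j i * F k i) = (if j = k then 1 else 0)"
    using orthF by auto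
  show "\<forall>i\<in>{1..5}. \<forall>j\<in>{1..3}. (\<Sum>k=1..5. M i k * F j k) = lam j * F j i"
    using eigF by auto
  fix x :: "nat \<Rightarrow> real" and \<mu> :: real
  assume H: "(\<exists>i\<in>{1..5}. x i \<noteq> 0) \<and> (\<forall>i\<in>{1..5}. (\<Sum>k=1..5. M i k * x k) = \<mu> * x i) \<and>
        (\<forall>j\<in>{1..3}. (\<Sum>i=1..5. F j i * x i) = 0)"
  define X where "X k = (\<Sum>i=1..5. F k i * x i)" for k
  have EX: "lam k * X k = \<mu> * X k" if "k\<in>{1..5}" for k
  proof -
    have "lam k * X k = (\<Sum>i=1..5. (\<Sum>l=1..5. M i l * F k l) * x i)"
      unfolding X_def sum_distrib_left using eigF that by (intro sum.cong refl) auto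
    also have "\<dots> = (\<Sum>l=1..5. F k l * (\<Sum>i=1..5. M i l * x i))"
      by (simp add: sum_distrib_left sum_distrib_right mult_ac) (rule sum.swap)
    also have "\<dots> = (\<Sum>l=1..5. F k l * (\<mu> * x l))"
    proof (intro sum.cong refl)
      fix l :: nat assume l: "l\<in>{1..5}"
      have "(\<Sum>i=1..5. M i l * x i) = (\<Sum>i=1..5. M l i * x i)" using symM l by (intro sum.cong refl) auto
      also have "\<dots> = \<mu> * x l" using H l by blast
      finally show "F k l * (\<Sum>i=1..5. M i l * x i) = F k l * (\<mu> * x l)" by simp
    qed
    also have "\<dots> = \<mu> * X k" by (simp add: X_def sum_distrib_left mult_ac)
    finally show ?thesis .
  qed
  have xexp: "x i = (\<Sum>k=1..5. X k * F k i)" if "i\<in>{1..5}" for i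
  proof -
    have "(\<Sum>k=1..5. X k * F k i) = (\<Sum>i'=1..5. x i' * (\<Sum>k=1..5. F k i' * F k i))"
      by (simp add: X_def sum_distrib_left sum_distrib_right mult_ac) (rule sum.swap)
    also have "\<dots> = (\<Sum>i'=1..5. x i' * (if i' = i then 1 else 0))"
      using complF that by (intro sum.cong refl) auto
    also have "\<dots> = x i" using that by (simp add: mult_if10)
    finally show ?thesis by simp
  qed
  show "\<forall>j\<in>{1..3}. \<mu> \<le> lam j"
  proof (rule ccontr)
    assume "\<not> (\<forall>j\<in>{1..3}. \<mu> \<le> lam j)"
    then obtain j where j: "j\<in>{1..3}" "lam j < \<mu>" by force
    have X0: "X k = 0" if "k\<in>{1..5}" for k
    proof (cases "k \<le> 3")
      case True thus ?thesis using H that unfolding X_def by auto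
    next
      case False
      hence "k\<in>{4..5}" using that by auto
      hence "lam k < lam j" using gap j by blast
      hence "lam k \<noteq> \<mu>" using j by simp
      thus ?thesis using EX[OF that] by simp
    qed
    have "x i = 0" if "i\<in>{1..5}" for i using xexp[OF that] X0 by simp
    thus False using H by blast
  qed
qed

lemma sep_reduce:
  assumes nn: "\<forall>j\<in>{1..3}. \<sigma> j \<ge> (0::real)" and p: "p = 1 \<or> p = 2"
  shows "sqdist3 (Zemb a b V \<sigma> p) (Zemb a b V \<sigma> 5) =
    (\<Sum>j=1..3. \<sigma> j * (\<Sum>i=1..5. (if i = p then Delta_diag a b p else if i = 5 then - Delta_diag a b 5 else 0) * V i j)^2)"
  unfolding sqdist3_def
proof (intro sum.cong refl)
  fix j :: nat assume j: "j\<in>{1..3}"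
  have e: "(\<Sum>i=1..5. (if i = p then Delta_diag a b p else if i = 5 then - Delta_diag a b 5 else 0) * V i j)
     = Delta_diag a b p * V p j - Delta_diag a b 5 * V 5 j"
    using p unfolding sum15 by auto
  have s: "(sqrt (\<sigma> j))^2 = \<sigma> j" using nn j by simp
  have d: "Zemb a b V \<sigma> p j - Zemb a b V \<sigma> 5 j = sqrt (\<sigma> j) * (Delta_diag a b p * V p j - Delta_diag a b 5 * V 5 j)"
    unfolding Zemb_def by (simp add: algebra_simps)
  show "(Zemb a b V \<sigma> p j - Zemb a b V \<sigma> 5 j)^2 =
     \<sigma> j * (\<Sum>i=1..5. (if i = p then Delta_diag a b p else if i = 5 then - Delta_diag a b 5 else 0) * V i j)^2"
    unfolding e d power_mult_distrib s ..
qed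


lemma ball45: "(\<forall>j\<in>{4..5::nat}. P j) \<longleftrightarrow> P 4 \<and> P 5"
proof -
  have "{4..5::nat} = {4,5}" by auto
  thus ?thesis by simp
qed

lemma sC: "c \<ge> 0 \<Longrightarrow> sqrt c * sqrt c = (c::real)" by simp
lemma sC': "c \<ge> 0 \<Longrightarrow> sqrt c * (sqrt c * x) = (c::real) * x" by (simp add: mult.assoc[symmetric])

lemma finalA:
  assumes "Cconst a b \<ge> 0"
  shows "((\<Sum>k=1..3. lamA a b k * (\<Sum>i=1..5. (if i = 1 then Delta_diag a b 1 else if i = 5 then - Delta_diag a b 5 else 0) * FA k i)^2)
       + (\<Sum>k=1..3. lamA a b k * (\<Sum>i=1..5. (if i = 2 then Delta_diag a b 2 else if i = 5 then - Delta_diag a b 5 else 0) * FA k i)^2)) / 2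
     = (7 + 12*b + 12*a) * ((1 - 2*b)/3 * (1 - b - 3/4*a)^2 + 1)"
  using assms unfolding sum13 sum15 FA_def FA_list_def Let_def lamA_def Delta_diag_def
  by (simp add: power2_eq_square field_simps s2 s6 s2' s6' sC sC' Cconst_def)

lemma finalB:
  assumes "Cconst a b \<ge> 0"
  shows "((\<Sum>k=1..3. lamB a b k * (\<Sum>i=1..5. (if i = 1 then Delta_diag a b 1 else if i = 5 then - Delta_diag a b 5 else 0) * FB k i)^2)
       + (\<Sum>k=1..3. lamB a b k * (\<Sum>i=1..5. (if i = 2 then Delta_diag a b 2 else if i = 5 then - Delta_diag a b 5 else 0) * FB k i)^2)) / 2
     = (7 + 12*b + 12*a) * ((2 - 3*a)/8 * (1 - b - 3/4*a)^2 + 1)"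
  using assms unfolding sum13 sum15 FB_def FB_list_def Let_def lamB_def Delta_diag_def
  by (simp add: power2_eq_square field_simps s2 s6 s2' s6' sC sC' Cconst_def)


lemma sep_expand:
  fixes F :: "nat \<Rightarrow> nat \<Rightarrow> real" and lam :: "nat \<Rightarrow> real"
  assumes top: "top3 (Mmat a b) V \<sigma>"
  and orthF: "\<forall>k\<in>{1..5}. \<forall>l\<in>{1..5}. (\<Sum>i=1..5. F k i * F l i) = (if k=l then 1 else 0)"
  and complF: "\<forall>i\<in>{1..5}. \<forall>i'\<in>{1..5}. (\<Sum>k=1..5. F k i * F k i') = (if i=i' then 1 else 0)"
  and eigF: "\<forall>k\<in>{1..5}. \<forall>i\<in>{1..5}. (\<Sum>l=1..5. Mmat a b i l * F k l) = lam k * F k i"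
  and gap: "\<forall>k\<in>{1..3}. \<forall>k'\<in>{4..5}. lam k' < lam k"
  and nn: "\<forall>k\<in>{1..3}. lam k \<ge> 0"
  shows "separability a b V \<sigma> =
    ((\<Sum>k=1..3. lam k * (\<Sum>i=1..5. (if i = 1 then Delta_diag a b 1 else if i = 5 then - Delta_diag a b 5 else 0) * F k i)^2)
       + (\<Sum>k=1..3. lam k * (\<Sum>i=1..5. (if i = 2 then Delta_diag a b 2 else if i = 5 then - Delta_diag a b 5 else 0) * F k i)^2)) / 2"
proof -
  note G = gen[OF symM orthF complF eigF gap top]
  have nns: "\<forall>j\<in>{1..3}. \<sigma> j \<ge> 0" using G(2) nn by blast
  have r1: "sqdist3 (Zemb a b V \<sigma> 1) (Zemb a b V \<sigma> 5) = (\<Sum>j=1..3. \<sigma> j * (\<Sum>i=1..5. (if i = 1 then Delta_diag a b 1 else if i = 5 then - Delta_diag a b 5 else 0) * V i j)^2)"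
    by (rule sep_reduce[OF nns]) simp
  have r2: "sqdist3 (Zemb a b V \<sigma> 2) (Zemb a b V \<sigma> 5) = (\<Sum>j=1..3. \<sigma> j * (\<Sum>i=1..5. (if i = 2 then Delta_diag a b 2 else if i = 5 then - Delta_diag a b 5 else 0) * V i j)^2)"
    by (rule sep_reduce[OF nns]) simp
  show ?thesis unfolding separability_def r1 r2 G(1) ..
qed

theorem theorem3:
  fixes a b :: real
  assumes "0 < a" "a < 2/9" "0 < b" "b < 1/4" "9/8*a \<noteq> b"
  shows "(\<exists>V \<sigma>. top3_eig a b V \<sigma>) \<and>
    (\<forall>V \<sigma>. top3_eig a b V \<sigma> \<longrightarrow>
      separability a b V \<sigma> =
        (if 9/8*a > b
         then (7 + 12*b + 12*a) * ((1 - 2*b)/3 * (1 - b - 3/4*a)^2 + 1)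
         else (7 + 12*b + 12*a) * ((2 - 3*a)/8 * (1 - b - 3/4*a)^2 + 1)))"
proof -
  have C: "Cconst a b \<ge> 0" using assms by (simp add: Cconst_def)
  show ?thesis
  proof (cases "9/8*a > b")
    case True
    have gap: "\<forall>k\<in>{1..3}. \<forall>k'\<in>{4..5}. lamA a b k' < lamA a b k"
      unfolding ball13 ball45 lamA_def using assms True by simp
    have nn: "\<forall>k\<in>{1..3}. lamA a b k \<ge> 0"
      unfolding ball13 lamA_def using assms by simp
    have ex: "top3_eig a b (\<lambda>i j. FA j i) (lamA a b)"
      unfolding top3_eig_eq by (rule gen_exists[OF symM orthFA complFA eigFA gap])
    show ?thesis using True ex sep_expand[OF _ orthFA complFA eigFA gap nn] finalA[OF C]
      unfolding top3_eig_eq by auto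
  next
    case False
    hence F: "b > 9/8*a" using assms by simp
    have gap: "\<forall>k\<in>{1..3}. \<forall>k'\<in>{4..5}. lamB a b k' < lamB a b k"
      unfolding ball13 ball45 lamB_def using assms F by simp
    have nn: "\<forall>k\<in>{1..3}. lamB a b k \<ge> 0"
      unfolding ball13 lamB_def using assms by simp
    have ex: "top3_eig a b (\<lambda>i j. FB j i) (lamB a b)"
      unfolding top3_eig_eq by (rule gen_exists[OF symM orthFB complFB eigFB gap])
    show ?thesis using False ex sep_expand[OF _ orthFB complFB eigFB gap nn] finalB[OF C]
      unfolding top3_eig_eq by auto
  qed
qed

end
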